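(* Let $n\ge3$ and $R$ a commutative ring containing an invertible element $v$. In $D_n$, for every $i$ (indices modulo $n$), $$E_{\overline{i+2}}E_{\overline{i+3}}\cdots E_{\overline{i+n}}=u^2E_i,$$ where the left side is the product of the $n-1$ elements $E_{\overline{i+2}},E_{\overline{i+3}},\dots,E_{\overline{i+n}}=E_{\bar i}$ in this order.
   Context: An affine $n$-diagram consists of the nodes $\mathbb{Z}\times\{0,1\}\subset\mathbb{R}^2$ (bottom row $\mathbb{Z}\times\{0\}$, top row $\mathbb{Z}\times\{1\}$) together with curves called edges such that: every node is an endpoint of exactly one edge; edges lie in $\mathbb{R}\times[0,1]$; an edge not joining two nodes is an infinite horizontal line meeting no node, and there are finitely many such; no two edges intersect; the diagram is invariant under horizontal translation by $n$. Diagrams are taken up to isotopy. The product $AB$: place $A$ on top of $B$, identify the bottom row of $A$ with the top row of $B$, remove the $x$ closed loops formed to get a diagram $C$; $AB=(v+v^{-1})^xC$. $D_n$ is the $R$-algebra with basis the affine $n$-diagrams and this product. $u$ is the diagram joining each bottom node $(j,0)$ to the top node $(j+1,1)$ by a straight segment. For $1\le i\le n$, $E_i$ is the diagram having, for each $k\equiv i\pmod n$, minimal horizontal edges joining $(k,1)$ to $(k+1,1)$ and $(k,0)$ to $(k+1,0)$, and straight vertical edges joining $(j,0)$ to $(j,1)$ for all $j\not\equiv i,i+1\pmod n$; $\bar i$ denotes the residue of $i$ mod $n$. *)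

theory Defs
  imports Main
begin

text \<open>A node (j, r) stands for (j,1) (top row) if r = True and (j,0) (bottom row) if r = False.
  An affine diagram up to isotopy is encoded by the matching M (M x is the other endpoint of
  the edge at x) together with the number l of infinite horizontal lines.\<close>

type_synonym node = "int \<times> bool"
type_synonym dgm = "(node \<Rightarrow> node) \<times> nat"

text \<open>Order of the nodes along the boundary of the strip (bottom row left to right, then top
  row right to left); a family of disjoint curves in the strip joining nodes exists iff the
  matching is non-interleaving w.r.t. this order.\<close>
definition node_less :: "node \<Rightarrow> node \<Rightarrow> bool" where
  "node_less x y = (case (x, y) of
      ((j, False), (k, False)) \<Rightarrow> j < k
    | ((j, False), (k, True)) \<Rightarrow> True
    | ((j, True), (k, False)) \<Rightarrow> False
    | ((j, True), (k, True)) \<Rightarrow> k < j)"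

definition affine_diagram :: "nat \<Rightarrow> dgm \<Rightarrow> bool" where
  "affine_diagram n d = (let M = fst d; l = snd d in
      (\<forall>x. M x \<noteq> x \<and> M (M x) = x)
    \<and> (\<forall>j r. M (j + int n, r) = (fst (M (j, r)) + int n, snd (M (j, r))))
    \<and> (\<forall>x y. node_less x (M x) \<and> node_less y (M y) \<longrightarrow>
          \<not> (node_less x y \<and> node_less y (M x) \<and> node_less (M x) (M y)))
    \<and> (l > 0 \<longrightarrow> (\<forall>j. snd (M (j, True)) = True)))"

text \<open>Nodes of the stacked picture: top row of A, middle row (bottom of A = top of B),
  bottom row of B.\<close>
datatype cnode = Top int | Mid int | Bot int

fun cshift :: "int \<Rightarrow> cnode \<Rightarrow> cnode" where
  "cshift m (Top j) = Top (j + m)"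
| "cshift m (Mid j) = Mid (j + m)"
| "cshift m (Bot j) = Bot (j + m)"

fun is_outer :: "cnode \<Rightarrow> bool" where
  "is_outer (Mid j) = False"
| "is_outer _ = True"

fun liftA :: "node \<Rightarrow> cnode" where
  "liftA (j, r) = (if r then Top j else Mid j)"

fun liftB :: "node \<Rightarrow> cnode" where
  "liftB (j, r) = (if r then Mid j else Bot j)"

fun unlift :: "cnode \<Rightarrow> node" where
  "unlift (Top j) = (j, True)"
| "unlift (Bot j) = (j, False)"
| "unlift (Mid j) = (j, True)"

fun nbrA :: "(node \<Rightarrow> node) \<Rightarrow> cnode \<Rightarrow> cnode option" where
  "nbrA MA (Top j) = Some (liftA (MA (j, True)))"
| "nbrA MA (Mid j) = Some (liftA (MA (j, False)))"
| "nbrA MA (Bot j) = None"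

fun nbrB :: "(node \<Rightarrow> node) \<Rightarrow> cnode \<Rightarrow> cnode option" where
  "nbrB MB (Top j) = None"
| "nbrB MB (Mid j) = Some (liftB (MB (j, True)))"
| "nbrB MB (Bot j) = Some (liftB (MB (j, False)))"

definition cadj :: "(node \<Rightarrow> node) \<Rightarrow> (node \<Rightarrow> node) \<Rightarrow> cnode \<Rightarrow> cnode \<Rightarrow> bool" where
  "cadj MA MB x y = (nbrA MA x = Some y \<or> nbrB MB x = Some y)"

definition cconn :: "(node \<Rightarrow> node) \<Rightarrow> (node \<Rightarrow> node) \<Rightarrow> cnode \<Rightarrow> cnode \<Rightarrow> bool" where
  "cconn MA MB = (cadj MA MB)\<^sup>*\<^sup>*"

definition comp_match :: "(node \<Rightarrow> node) \<Rightarrow> (node \<Rightarrow> node) \<Rightarrow> node \<Rightarrow> node" where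
  "comp_match MA MB p = (let x = (if snd p then Top (fst p) else Bot (fst p)) in
     unlift (THE y. is_outer y \<and> y \<noteq> x \<and> cconn MA MB x y))"

text \<open>Components consisting of middle nodes only (closed loops if finite, new horizontal lines
  if infinite), counted up to the translation by n.\<close>
definition mid_comps :: "(node \<Rightarrow> node) \<Rightarrow> (node \<Rightarrow> node) \<Rightarrow> cnode set set" where
  "mid_comps MA MB = {Collect (cconn MA MB (Mid k)) | k.
      \<forall>y. cconn MA MB (Mid k) y \<longrightarrow> \<not> is_outer y}"

definition num_orbits :: "nat \<Rightarrow> cnode set set \<Rightarrow> nat" where
  "num_orbits n S = card ((\<lambda>C. {cshift (int n * m) ` C | m. True}) ` S)"

text \<open>compose n A B = (x, C) where AB = (v + v^-1)^x C.\<close>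
definition compose :: "nat \<Rightarrow> dgm \<Rightarrow> dgm \<Rightarrow> nat \<times> dgm" where
  "compose n A B = (let MA = fst A; MB = fst B in
     (num_orbits n {C \<in> mid_comps MA MB. finite C},
      (comp_match MA MB,
       snd A + snd B + num_orbits n {C \<in> mid_comps MA MB. infinite C})))"

text \<open>Elements of D_n: finitely supported R-valued functions on diagrams (coefficients w.r.t.
  the diagram basis). The product is the bilinear extension of the diagram product, with
  closed loops evaluated to delta = v + v^-1.\<close>
definition dsupp :: "(dgm \<Rightarrow> 'a::zero) \<Rightarrow> dgm set" where
  "dsupp f = {d. f d \<noteq> 0}"

definition dbasis :: "dgm \<Rightarrow> dgm \<Rightarrow> 'a::{zero,one}" where
  "dbasis d = (\<lambda>e. if e = d then 1 else 0)"

definition dmult :: "nat \<Rightarrow> 'a::comm_ring_1 \<Rightarrow> (dgm \<Rightarrow> 'a) \<Rightarrow> (dgm \<Rightarrow> 'a) \<Rightarrow> dgm \<Rightarrow> 'a" where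
  "dmult n \<delta> f g = (\<lambda>d. \<Sum>p \<in> dsupp f \<times> dsupp g.
      (if snd (compose n (fst p) (snd p)) = d
       then f (fst p) * g (snd p) * \<delta> ^ fst (compose n (fst p) (snd p)) else 0))"

fun dprod :: "nat \<Rightarrow> 'a::comm_ring_1 \<Rightarrow> (dgm \<Rightarrow> 'a) list \<Rightarrow> dgm \<Rightarrow> 'a" where
  "dprod n \<delta> [] = undefined"
| "dprod n \<delta> [x] = x"
| "dprod n \<delta> (x # y # ys) = dmult n \<delta> x (dprod n \<delta> (y # ys))"

definition u_dgm :: dgm where
  "u_dgm = ((\<lambda>(j, r). if r then (j - 1, False) else (j + 1, True)), 0)"

definition E_dgm :: "nat \<Rightarrow> int \<Rightarrow> dgm" where
  "E_dgm n i = ((\<lambda>(k, r).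
      if k mod int n = i mod int n then (k + 1, r)
      else if k mod int n = (i + 1) mod int n then (k - 1, r)
      else (k, \<not> r)), 0)"

end

theory Submission
  imports Defs
begin


lemma cconn_refl: "cconn MA MB x x" by (simp add: cconn_def)
lemma cconn_step: "cadj MA MB x y \<Longrightarrow> cconn MA MB y z \<Longrightarrow> cconn MA MB x z"
  unfolding cconn_def by (rule converse_rtranclp_into_rtranclp)

fun chain :: "(node \<Rightarrow> node) \<Rightarrow> (node \<Rightarrow> node) \<Rightarrow> cnode list \<Rightarrow> bool" where
  "chain MA MB [] = True"
| "chain MA MB [x] = True"
| "chain MA MB (x # y # zs) = (cadj MA MB x y \<and> chain MA MB (y # zs))"

lemma chain_cconn: "chain MA MB (x # zs) \<Longrightarrow> cconn MA MB x (last (x # zs))"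
  by (induction zs arbitrary: x) (auto intro: cconn_refl cconn_step)

lemma closed_cconn:
  assumes "\<forall>z\<in>S. \<forall>w. cadj MA MB z w \<longrightarrow> w \<in> S" "x \<in> S" "cconn MA MB x y"
  shows "y \<in> S"
  using assms(3,2) unfolding cconn_def
  by (induction rule: rtranclp_induct) (use assms(1) in blast)+

definition closedS :: "(node \<Rightarrow> node) \<Rightarrow> (node \<Rightarrow> node) \<Rightarrow> cnode list \<Rightarrow> bool" where
  "closedS MA MB zs = (\<forall>z\<in>set zs. (\<forall>w. nbrA MA z = Some w \<longrightarrow> w \<in> set zs)
                                 \<and> (\<forall>w. nbrB MB z = Some w \<longrightarrow> w \<in> set zs))"

definition walk_ok :: "(node \<Rightarrow> node) \<Rightarrow> (node \<Rightarrow> node) \<Rightarrow> cnode \<Rightarrow> cnode list \<Rightarrow> bool" where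
  "walk_ok MA MB x zs = (chain MA MB (x # zs) \<and> zs \<noteq> [] \<and> is_outer (last zs) \<and> last zs \<noteq> x
     \<and> closedS MA MB (x # zs) \<and> (\<forall>z\<in>set (butlast zs). \<not> is_outer z))"

lemma walk_the:
  assumes "walk_ok MA MB x zs"
  shows "(THE y. is_outer y \<and> y \<noteq> x \<and> cconn MA MB x y) = last zs"
proof (rule the_equality)
  have ne: "zs \<noteq> []" using assms by (simp add: walk_ok_def)
  have "cconn MA MB x (last (x # zs))" using chain_cconn[of MA MB x zs] assms by (simp add: walk_ok_def)
  then show "is_outer (last zs) \<and> last zs \<noteq> x \<and> cconn MA MB x (last zs)"
    using assms ne by (simp add: walk_ok_def)
  fix y assume y: "is_outer y \<and> y \<noteq> x \<and> cconn MA MB x y"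
  have cl: "\<forall>z\<in>set (x # zs). \<forall>w. cadj MA MB z w \<longrightarrow> w \<in> set (x # zs)"
    using assms unfolding walk_ok_def closedS_def cadj_def by blast
  have "y \<in> set (x # zs)" using closed_cconn[OF cl] y by auto
  then have "y \<in> set zs" using y by auto
  moreover have "set zs = set (butlast zs) \<union> {last zs}"
    using ne by (metis append_butlast_last_id set_append empty_set list.simps(15) Un_empty_right)
  ultimately show "y = last zs" using y assms by (auto simp: walk_ok_def)
qed

lemma comp_matchI:
  assumes "\<And>k. \<exists>zs. walk_ok MA MB (Top k) zs \<and> unlift (last zs) = C (k, True)"
    and "\<And>k. \<exists>zs. walk_ok MA MB (Bot k) zs \<and> unlift (last zs) = C (k, False)"
  shows "comp_match MA MB = C"
proof
  fix p :: node
  obtain k r where p: "p = (k, r)" by fastforce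
  show "comp_match MA MB p = C p"
  proof (cases r)
    case True
    obtain zs where "walk_ok MA MB (Top k) zs \<and> unlift (last zs) = C (k, True)" using assms(1) by blast
    then show ?thesis using walk_the[of MA MB "Top k" zs] p True by (simp add: comp_match_def)
  next
    case False
    obtain zs where "walk_ok MA MB (Bot k) zs \<and> unlift (last zs) = C (k, False)" using assms(2) by blast
    then show ?thesis using walk_the[of MA MB "Bot k" zs] p False by (simp add: comp_match_def)
  qed
qed

lemma mid_reachI:
  assumes "\<And>k. \<exists>zs. chain MA MB (Mid k # zs) \<and> is_outer (last (Mid k # zs))"
  shows "mid_comps MA MB = {}"
  unfolding mid_comps_def using assms chain_cconn by blast

lemma composeI:
  assumes "\<And>k. \<exists>zs. chain MA MB (Mid k # zs) \<and> is_outer (last (Mid k # zs))"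
    and "comp_match MA MB = C"
  shows "compose n (MA, 0) (MB, 0) = (0, (C, 0))"
  using mid_reachI[OF assms(1)] assms(2) by (simp add: compose_def num_orbits_def)

lemma dmult_basis:
  assumes "fst (compose n A B) = 0"
  shows "dmult n \<delta> (dbasis A) (dbasis B) = (dbasis (snd (compose n A B)) :: dgm \<Rightarrow> 'a::comm_ring_1)"
proof (cases "(1::'a) = 0")
  case True
  then have z: "\<And>x::'a. x = 0" by (metis mult_1 mult_zero_left)
  show ?thesis
  proof
    fix d show "dmult n \<delta> (dbasis A) (dbasis B) d = dbasis (snd (compose n A B)) d"
      by (rule trans[OF z z[symmetric]])
  qed
next
  case False
  then have s: "\<And>d. dsupp (dbasis d :: dgm \<Rightarrow> 'a) = {d}" by (auto simp: dsupp_def dbasis_def)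
  show ?thesis
  proof
    fix d show "dmult n \<delta> (dbasis A) (dbasis B) d = dbasis (snd (compose n A B)) d"
      unfolding dmult_def s using assms by (simp add: dbasis_def)
  qed
qed

definition U2 :: "node \<Rightarrow> node" where
  "U2 = (\<lambda>(j, r). if r then (j - 2, False) else (j + 2, True))"

lemma uu: "compose n u_dgm u_dgm = (0, (U2, 0))"
  unfolding u_dgm_def
proof (rule composeI)
  fix k
  show "\<exists>zs. chain (\<lambda>(j, r). if r then (j - 1, False) else (j + 1, True)) (\<lambda>(j, r). if r then (j - 1, False) else (j + 1, True)) (Mid k # zs) \<and> is_outer (last (Mid k # zs))"
    by (rule exI[of _ "[Top (k+1)]"]) (simp add: cadj_def)
next
  show "comp_match (\<lambda>(j, r). if r then (j - 1, False) else (j + 1, True)) (\<lambda>(j, r). if r then (j - 1, False) else (j + 1, True)) = U2"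
  proof (rule comp_matchI)
    fix k
    show "\<exists>zs. walk_ok (\<lambda>(j, r). if r then (j - 1, False) else (j + 1, True)) (\<lambda>(j, r). if r then (j - 1, False) else (j + 1, True)) (Top k) zs \<and> unlift (last zs) = U2 (k, True)"
      by (rule exI[of _ "[Mid (k - 1), Bot (k - 2)]"]) (simp add: walk_ok_def closedS_def cadj_def U2_def)
    show "\<exists>zs. walk_ok (\<lambda>(j, r). if r then (j - 1, False) else (j + 1, True)) (\<lambda>(j, r). if r then (j - 1, False) else (j + 1, True)) (Bot k) zs \<and> unlift (last zs) = U2 (k, False)"
      by (rule exI[of _ "[Mid (k + 1), Top (k + 2)]"]) (simp add: walk_ok_def closedS_def cadj_def U2_def)
  qed
qed



definition rel :: "int \<Rightarrow> int \<Rightarrow> int \<Rightarrow> int" where "rel N a k = (k - a) mod N"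

definition Er :: "int \<Rightarrow> int \<Rightarrow> node \<Rightarrow> node" where
  "Er N j = (\<lambda>(k, r). if rel N j k = 0 then (k + 1, r) else if rel N j k = 1 then (k - 1, r) else (k, \<not> r))"

definition Pm :: "int \<Rightarrow> int \<Rightarrow> int \<Rightarrow> node \<Rightarrow> node" where
  "Pm N a L = (\<lambda>(k, r). if r then
       (if rel N a k = 0 then (k + 1, True) else if rel N a k = 1 then (k - 1, True)
        else if rel N a k \<le> L then (k - 2, False) else (k, False))
     else (if rel N a k = L - 1 then (k + 1, False) else if rel N a k = L then (k - 1, False)
        else if rel N a k \<le> L - 2 then (k + 2, True) else (k, True)))"

lemma mod_lemmas:
  fixes x N :: int
  shows "0 \<le> x \<Longrightarrow> x < N \<Longrightarrow> x mod N = x"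
    and "N \<le> x \<Longrightarrow> x < 2 * N \<Longrightarrow> x mod N = x - N"
    and "- N \<le> x \<Longrightarrow> x < 0 \<Longrightarrow> x mod N = x + N"
proof -
  show "0 \<le> x \<Longrightarrow> x < N \<Longrightarrow> x mod N = x" by simp
  show "N \<le> x \<Longrightarrow> x < 2 * N \<Longrightarrow> x mod N = x - N"
  proof -
    assume a: "N \<le> x" "x < 2 * N"
    have "x mod N = (x - N) mod N" using mod_add_self2[of "x - N" N] by simp
    also have "\<dots> = x - N" by (rule mod_pos_pos_trivial) (use a in linarith)+
    finally show ?thesis .
  qed
  show "- N \<le> x \<Longrightarrow> x < 0 \<Longrightarrow> x mod N = x + N"
  proof -
    assume a: "- N \<le> x" "x < 0"
    have "x mod N = (x + N) mod N" by simp
    also have "\<dots> = x + N" by (rule mod_pos_pos_trivial) (use a in linarith)+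
    finally show ?thesis .
  qed
qed

lemma rel_bounds: "0 < N \<Longrightarrow> 0 \<le> rel N a k \<and> rel N a k < N"
  by (simp add: rel_def)

lemma rel_add: "rel N a (k + c) = (rel N a k + c) mod N"
  by (simp add: rel_def mod_simps algebra_simps)

lemma rel_p1: "3 \<le> N \<Longrightarrow> rel N a (k + 1) = (if rel N a k = N - 1 then 0 else rel N a k + 1)"
  using rel_bounds[of N a k] unfolding rel_add by (auto simp: mod_lemmas)
lemma rel_m1: "3 \<le> N \<Longrightarrow> rel N a (k - 1) = (if rel N a k = 0 then N - 1 else rel N a k - 1)"
  using rel_bounds[of N a k] rel_add[of N a k "-1"] by (auto simp: mod_lemmas)
lemma rel_p2: "3 \<le> N \<Longrightarrow> rel N a (k + 2) = (if rel N a k = N - 1 then 1 else if rel N a k = N - 2 then 0 else rel N a k + 2)"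
  using rel_bounds[of N a k] unfolding rel_add by (auto simp: mod_lemmas)
lemma rel_m2: "3 \<le> N \<Longrightarrow> rel N a (k - 2) = (if rel N a k = 0 then N - 2 else if rel N a k = 1 then N - 1 else rel N a k - 2)"
  using rel_bounds[of N a k] rel_add[of N a k "-2"] by (auto simp: mod_lemmas)

lemma rel_am1: "rel N (a - 1) k = rel N a (k + 1)" by (simp add: rel_def algebra_simps)
lemma rel_ap2: "rel N (a + 2) k = rel N a (k - 2)" by (simp add: rel_def algebra_simps)


lemmas S = walk_ok_def closedS_def cadj_def Er_def Pm_def U2_def rel_p1 rel_m1 rel_p2 rel_m2 rel_ap2

lemma comp2:
  assumes N: "3 \<le> N"
  shows "compose n (U2, 0) (Er N i, 0) = (0, (Pm N (i + 2) (N - 1), 0))"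
proof (rule composeI)
  fix k
  show "\<exists>zs. chain U2 (Er N i) (Mid k # zs) \<and> is_outer (last (Mid k # zs))"
    by (rule exI[of _ "[Top (k+2)]"]) (simp add: cadj_def U2_def)
next
  show "comp_match U2 (Er N i) = Pm N (i + 2) (N - 1)"
  proof (rule comp_matchI)
    fix k :: int
    obtain j where k: "k = j + 2" by (metis diff_add_cancel)
    have b: "0 \<le> rel N i j" "rel N i j < N" using rel_bounds[of N i j] N by auto
    consider "rel N i j = 0" | "rel N i j = 1" | "2 \<le> rel N i j" using b by linarith
    then show "\<exists>zs. walk_ok U2 (Er N i) (Top k) zs \<and> unlift (last zs) = Pm N (i + 2) (N - 1) (k, True)"
    proof cases
      case 1 then show ?thesis using N b k
        by (intro exI[of _ "[Mid j, Mid (j + 1), Top (j + 3)]"]) (simp add: S)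
    next
      case 2 then show ?thesis using N b k
        by (intro exI[of _ "[Mid j, Mid (j - 1), Top (j + 1)]"]) (simp add: S)
    next
      case 3 then show ?thesis using N b k
        by (intro exI[of _ "[Mid j, Bot j]"]) (simp add: S)
    qed
  next
    fix k :: int
    have b: "0 \<le> rel N i k" "rel N i k < N" using rel_bounds[of N i k] N by auto
    consider "rel N i k = 0" | "rel N i k = 1" | "2 \<le> rel N i k" using b by linarith
    then show "\<exists>zs. walk_ok U2 (Er N i) (Bot k) zs \<and> unlift (last zs) = Pm N (i + 2) (N - 1) (k, False)"
    proof cases
      case 1 then show ?thesis using N b
        by (intro exI[of _ "[Bot (k + 1)]"]) (simp add: S)
    next
      case 2 then show ?thesis using N b
        by (intro exI[of _ "[Bot (k - 1)]"]) (simp add: S)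
    next
      case 3 then show ?thesis using N b
        by (intro exI[of _ "[Mid k, Top (k + 2)]"]) (simp add: S)
    qed
  qed
qed


lemma Er_am1: "3 \<le> N \<Longrightarrow> Er N (a - 1) (k, r) = (if rel N a k = N - 1 then (k + 1, r) else if rel N a k = 0 then (k - 1, r) else (k, \<not> r))"
  using rel_bounds[of N a k] by (auto simp add: Er_def rel_am1 rel_p1)

lemmas S3 = walk_ok_def closedS_def cadj_def Er_am1 Pm_def rel_p1 rel_m1 rel_p2 rel_m2 rel_am1

lemma comp3:
  assumes N: "3 \<le> N" and L: "1 \<le> L" "L \<le> N - 2"
  shows "compose n (Er N (a - 1), 0) (Pm N a L, 0) = (0, (Pm N (a - 1) (L + 1), 0))"
proof (rule composeI)
  fix k
  have b: "0 \<le> rel N a k" "rel N a k < N" using rel_bounds[of N a k] N by auto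
  consider "rel N a k = N - 1" | "rel N a k = 0" | "1 \<le> rel N a k" "rel N a k \<le> N - 2" using b by linarith
  then show "\<exists>zs. chain (Er N (a - 1)) (Pm N a L) (Mid k # zs) \<and> is_outer (last (Mid k # zs))"
  proof cases
    case 1 then show ?thesis using N L b
      by (intro exI[of _ "[Bot k]"]) (simp add: S3)
  next
    case 2 then show ?thesis using N L b
      by (intro exI[of _ "[Mid (k - 1), Bot (k - 1)]"]) (simp add: S3)
  next
    case 3 then show ?thesis using N L b
      by (intro exI[of _ "[Top k]"]) (simp add: S3)
  qed
next
  show "comp_match (Er N (a - 1)) (Pm N a L) = Pm N (a - 1) (L + 1)"
  proof (rule comp_matchI)
    fix k :: int
    have b: "0 \<le> rel N a k" "rel N a k < N" using rel_bounds[of N a k] N by auto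
    consider "rel N a k = N - 1" | "rel N a k = 0" | "rel N a k = 1"
      | "2 \<le> rel N a k" "rel N a k \<le> L" | "L + 1 \<le> rel N a k" "rel N a k \<le> N - 2" using b by linarith
    then show "\<exists>zs. walk_ok (Er N (a - 1)) (Pm N a L) (Top k) zs \<and> unlift (last zs) = Pm N (a - 1) (L + 1) (k, True)"
    proof cases
      case 1 then show ?thesis using N L b
        by (intro exI[of _ "[Top (k + 1)]"]) (simp add: S3)
    next
      case 2 then show ?thesis using N L b
        by (intro exI[of _ "[Top (k - 1)]"]) (simp add: S3)
    next
      case 3 then show ?thesis using N L b
        by (intro exI[of _ "[Mid k, Mid (k - 1), Mid (k - 2), Bot (k - 2)]"]) (simp add: S3)
    next
      case 4 then show ?thesis using N L b
        by (intro exI[of _ "[Mid k, Bot (k - 2)]"]) (simp add: S3)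
    next
      case 5 then show ?thesis using N L b
        by (intro exI[of _ "[Mid k, Bot k]"]) (simp add: S3)
    qed
  next
    fix k :: int
    have b: "0 \<le> rel N a k" "rel N a k < N" using rel_bounds[of N a k] N by auto
    consider "rel N a k = L - 1" | "rel N a k = L" | "rel N a k \<le> L - 2"
      | "rel N a k = N - 1" | "L + 1 \<le> rel N a k" "rel N a k \<le> N - 2" using b by linarith
    then show "\<exists>zs. walk_ok (Er N (a - 1)) (Pm N a L) (Bot k) zs \<and> unlift (last zs) = Pm N (a - 1) (L + 1) (k, False)"
    proof cases
      case 1 then show ?thesis using N L b
        by (intro exI[of _ "[Bot (k + 1)]"]) (simp add: S3)
    next
      case 2 then show ?thesis using N L b
        by (intro exI[of _ "[Bot (k - 1)]"]) (simp add: S3)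
    next
      case 3 then show ?thesis using N L b
        by (intro exI[of _ "[Mid (k + 2), Top (k + 2)]"]) (simp add: S3)
    next
      case 4 then show ?thesis using N L b
        by (intro exI[of _ "[Mid k, Mid (k + 1), Mid (k + 2), Top (k + 2)]"]) (simp add: S3)
    next
      case 5 then show ?thesis using N L b
        by (intro exI[of _ "[Mid k, Top k]"]) (simp add: S3)
    qed
  qed
qed



lemma E_Er:
  assumes "2 \<le> n"
  shows "E_dgm n j = (Er (int n) j, 0)"
proof -
  have N: "2 \<le> int n" using assms by simp
  have 1: "(k mod int n = j mod int n) = (rel (int n) j k = 0)" for k
    by (simp add: rel_def mod_eq_dvd_iff dvd_eq_mod_eq_0)
  have 2: "(k mod int n = (j + 1) mod int n) = (rel (int n) j k = 1)" for k
  proof -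
    have "(k mod int n = (j + 1) mod int n) = ((k - j) mod int n = 1 mod int n)"
      by (simp add: mod_eq_dvd_iff algebra_simps)
    also have "1 mod int n = 1" using N by simp
    finally show ?thesis by (simp add: rel_def)
  qed
  show ?thesis unfolding E_dgm_def Er_def 1 2 ..
qed

lemma Pm1: "3 \<le> N \<Longrightarrow> Pm N a 1 = Er N a"
proof
  fix p :: node assume N: "3 \<le> N"
  obtain k r where p: "p = (k, r)" by fastforce
  show "Pm N a 1 p = Er N a p" using rel_bounds[of N a k] N unfolding p
    by (auto simp: Pm_def Er_def)
qed

theorem lemma2p3p2:
  fixes v vi :: "'a::comm_ring_1" and n :: nat and i :: int
  assumes "n \<ge> 3" and "v * vi = 1"
  shows "dprod n (v + vi) (map (\<lambda>j. dbasis (E_dgm n (i + int j))) [2..<n+1])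
       = dmult n (v + vi) (dmult n (v + vi) (dbasis u_dgm) (dbasis u_dgm)) (dbasis (E_dgm n i))"
proof -
  define N where "N = int n"
  define f :: "nat \<Rightarrow> dgm \<Rightarrow> 'a" where "f = (\<lambda>j. dbasis (E_dgm n (i + int j)))"
  have N3: "3 \<le> N" using assms N_def by simp
  have rhs: "dmult n (v + vi) (dmult n (v + vi) (dbasis u_dgm) (dbasis u_dgm)) (dbasis (E_dgm n i))
      = (dbasis (Pm N (i + 2) (N - 1), 0) :: dgm \<Rightarrow> 'a)"
    using dmult_basis[where 'a='a, of n u_dgm u_dgm] uu[of n] dmult_basis[where 'a='a, of n "(U2, 0)" "(Er N i, 0)"]
      comp2[OF N3, of n i] E_Er[of n i] assms(1) N_def by simp
  have main: "m \<le> n \<Longrightarrow> 2 \<le> m \<Longrightarrow> dprod n (v + vi) (map f [m..<n+1]) = dbasis (Pm N (i + int m) (N + 1 - int m), 0)" for m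
  proof (induction rule: inc_induct)
    case base
    have "[n..<n+1] = [n]" by simp
    then show ?case using E_Er[of n "i + int n"] Pm1[OF N3] assms(1) N_def by (simp add: f_def)
  next
    case (step m')
    have l: "[m'..<n+1] = m' # Suc m' # [Suc (Suc m')..<n+1]" using step by (simp add: upt_conv_Cons)
    have l2: "[Suc m'..<n+1] = Suc m' # [Suc (Suc m')..<n+1]" using step by (simp add: upt_conv_Cons)
    have ih: "dprod n (v + vi) (f (Suc m') # map f [Suc (Suc m')..<n+1]) = dbasis (Pm N (i + int (Suc m')) (N + 1 - int (Suc m')), 0)"
    proof -
      have "2 \<le> Suc m'" using step by simp
      then have ih0: "dprod n (v + vi) (map f [Suc m'..<n+1]) = dbasis (Pm N (i + int (Suc m')) (N + 1 - int (Suc m')), 0)"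
        using step.IH by blast
      then show ?thesis by (simp only: l2 list.map)
    qed
    have c: "compose n (Er N (i + int (Suc m') - 1), 0) (Pm N (i + int (Suc m')) (N - int m'), 0)
       = (0, (Pm N (i + int (Suc m') - 1) (N - int m' + 1), 0))"
      by (rule comp3) (use N3 step N_def in auto)
    have e: "E_dgm n (i + int m') = (Er N (i + int (Suc m') - 1), 0)" using E_Er[of n "i + int m'"] assms(1) N_def by simp
    show ?case unfolding l using ih
      apply (simp only: list.map dprod.simps)
      apply (simp add: f_def e)
      using dmult_basis[where 'a='a, of n "(Er N (i + int (Suc m') - 1), 0)" "(Pm N (i + int (Suc m')) (N - int m'), 0)" "v + vi"] c
      by (simp add: algebra_simps)
  qed
  have "dprod n (v + vi) (map f [2..<n+1]) = dbasis (Pm N (i + 2) (N - 1), 0)"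
    using main[of 2] assms(1) by simp
  then show ?thesis using rhs by (simp add: f_def)
qed

end
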